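(* Let $\theta$ be a perfect symmetric paperfolding morphism on $\{a,b,c,d\}$ and let $\mathcal{L}_\theta$ be the language generated by $\theta$. Then ${\rm S}^\oplus(\mathcal{L}_\theta)=\mathbb{Z}\times\mathbb{Z}$.
   Context: Let ${\rm S}^\oplus$ be the homomorphism from words over $\{a,b,c,d\}$ to $\mathbb{Z}\times\mathbb{Z}$ given by ${\rm S}^\oplus(a)=(1,0)$, ${\rm S}^\oplus(b)=(0,1)$, ${\rm S}^\oplus(c)=(-1,0)$, ${\rm S}^\oplus(d)=(0,-1)$ and ${\rm S}^\oplus(w_1\cdots w_n)=\sum_i{\rm S}^\oplus(w_i)$. The language $\mathcal{L}_\theta$ generated by a morphism $\theta$ is the set of all nonempty finite words occurring as factors of $\theta^n(x)$ for some $n\ge0$ and some letter $x$. Let $\sigma$ be the rotation morphism $\sigma(a)=b$, $\sigma(b)=c$, $\sigma(c)=d$, $\sigma(d)=a$, and $\tau$ the reversal anti-morphism $\tau(w_1\cdots w_n)=w_n\cdots w_1$. A morphism $\theta$ on $\{a,b,c,d\}$ is a paperfolding morphism if (1) $\sigma\tau\theta=\theta$ and (2) in the word $\theta(a)$ letters from $\{a,c\}$ alternate with letters from $\{b,d\}$. It is symmetric if $\sigma\theta=\theta\sigma$ (equivalently, $\theta(a)$ is a palindrome). An infinite word $x=x_0x_1\cdots$ generates the walk $Z_0=(0,0)$, $Z_{n+1}=Z_n+{\rm S}^\oplus(x_n)$. A paperfolding morphism $\theta$ with $\theta(a)$ beginning with $a$ (and $|\theta(a)|\ge2$) is perfect if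 the four walks generated by the fixed point $x=\theta^\infty(a)$ and its rotations $\sigma(x),\sigma^2(x),\sigma^3(x)$ together visit every point of $\mathbb{Z}\times\mathbb{Z}$ other than the origin exactly twice, and the origin exactly four times. (Example: $\theta(a)=abcba$, $\theta(b)=bcdcb$, $\theta(c)=cdadc$, $\theta(d)=dabad$.) *)

theory Defs
  imports Main "HOL-Library.Product_Plus"
begin

datatype letter = A | B | C | D

type_synonym morph = "letter \<Rightarrow> letter list"

fun Sv :: "letter \<Rightarrow> int \<times> int" where
  "Sv A = (1, 0)" | "Sv B = (0, 1)" | "Sv C = (-1, 0)" | "Sv D = (0, -1)"

definition Ssum :: "letter list \<Rightarrow> int \<times> int" where
  "Ssum w = sum_list (map Sv w)"

fun rot :: "letter \<Rightarrow> letter" where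
  "rot A = B" | "rot B = C" | "rot C = D" | "rot D = A"

definition ext :: "morph \<Rightarrow> letter list \<Rightarrow> letter list" where
  "ext \<theta> w = concat (map \<theta> w)"

definition language :: "morph \<Rightarrow> letter list set" where
  "language \<theta> = {w. w \<noteq> [] \<and> (\<exists>n x u v. u @ w @ v = (ext \<theta> ^^ n) [x])}"

definition in_ac :: "letter \<Rightarrow> bool" where
  "in_ac x \<longleftrightarrow> x = A \<or> x = C"

(* (1): sigma tau theta = theta, read as: theta(sigma x) = sigma(reverse(theta x));
   (2): in theta(a), letters from {a,c} alternate with letters from {b,d} *)
definition paperfolding :: "morph \<Rightarrow> bool" where
  "paperfolding \<theta> \<longleftrightarrow>
     (\<forall>x. \<theta> (rot x) = map rot (rev (\<theta> x))) \<and>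
     (\<forall>i. Suc i < length (\<theta> A) \<longrightarrow> in_ac (\<theta> A ! i) \<noteq> in_ac (\<theta> A ! Suc i))"

definition symmetric_morph :: "morph \<Rightarrow> bool" where
  "symmetric_morph \<theta> \<longleftrightarrow> (\<forall>x. \<theta> (rot x) = map rot (\<theta> x))"

(* fixed point theta^infinity(a); well defined when theta(a) starts with a and |theta(a)| \<ge> 2 *)
definition fixpt :: "morph \<Rightarrow> nat \<Rightarrow> letter" where
  "fixpt \<theta> n = (ext \<theta> ^^ Suc n) [A] ! n"

definition walk :: "(nat \<Rightarrow> letter) \<Rightarrow> nat \<Rightarrow> int \<times> int" where
  "walk x n = (\<Sum>i<n. Sv (x i))"

definition perfect :: "morph \<Rightarrow> bool" where
  "perfect \<theta> \<longleftrightarrow> paperfolding \<theta> \<and> length (\<theta> A) \<ge> 2 \<and> hd (\<theta> A) = A \<and>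
     (\<forall>p. card {(j, n). j < (4::nat) \<and> walk ((rot ^^ j) \<circ> fixpt \<theta>) n = p}
            = (if p = (0, 0) then 4 else 2))"

end

theory Submission
  imports Defs
begin


lemma ext_Nil[simp]: "ext th [] = []" by (simp add: ext_def)
lemma ext_Cons[simp]: "ext th (x # w) = th x @ ext th w" by (simp add: ext_def)
lemma ext_append[simp]: "ext th (u @ v) = ext th u @ ext th v" by (simp add: ext_def)
lemma extpow_append: "(ext th ^^ n) (u @ v) = (ext th ^^ n) u @ (ext th ^^ n) v"
  by (induction n) auto

lemma Ssum_Nil[simp]: "Ssum [] = 0" by (simp add: Ssum_def)
lemma Ssum_Cons[simp]: "Ssum (x # w) = Sv x + Ssum w" by (simp add: Ssum_def)
lemma Ssum_append[simp]: "Ssum (u @ v) = Ssum u + Ssum v" by (simp add: Ssum_def)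

definition rotv :: "int \<times> int \<Rightarrow> int \<times> int" where "rotv p = (- snd p, fst p)"

lemma Sv_rot: "Sv (rot x) = rotv (Sv x)" by (cases x) (auto simp: rotv_def)
lemma rotv_add: "rotv (p + q) = rotv p + rotv q" by (simp add: rotv_def)
lemma rotv_zero[simp]: "rotv 0 = 0" by (simp add: rotv_def zero_prod_def)
lemma rotvpow_add: "(rotv ^^ j) (p + q) = (rotv ^^ j) p + (rotv ^^ j) q"
  by (induction j) (auto simp: rotv_add)
lemma rotvpow_zero[simp]: "(rotv ^^ j) 0 = 0" by (induction j) auto
lemma Sv_rotpow: "Sv ((rot ^^ j) x) = (rotv ^^ j) (Sv x)"
  by (induction j) (auto simp: Sv_rot)
lemma Ssum_map_rotpow: "Ssum (map (rot ^^ j) w) = (rotv ^^ j) (Ssum w)"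
  by (induction w) (auto simp: Sv_rotpow rotvpow_add)

lemma rotvpow_sum: "(rotv ^^ j) (\<Sum>i<(n::nat). f i) = (\<Sum>i<n. (rotv ^^ j) (f i))"
  by (induction n) (auto simp: rotvpow_add)

lemma inj_rot: "inj rot"
proof (rule injI)
  fix x y show "rot x = rot y \<Longrightarrow> x = y" by (cases x; cases y) auto
qed

lemma letter_rot: "\<exists>k<4. x = (rot ^^ k) A"
proof (cases x)
  case A then show ?thesis by (intro exI[of _ 0]) auto
next
  case B then show ?thesis by (intro exI[of _ 1]) auto
next
  case C then show ?thesis by (intro exI[of _ 2]) (auto simp: numeral_2_eq_2)
next
  case D then show ?thesis by (intro exI[of _ 3]) (auto simp: numeral_3_eq_3)
qed

lemma Ssum_take_sum: "n \<le> length xs \<Longrightarrow> Ssum (take n xs) = (\<Sum>i<n. Sv (xs ! i))"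
proof (induction n)
  case 0 then show ?case by simp
next
  case (Suc n)
  then have "take (Suc n) xs = take n xs @ [xs ! n]" by (simp add: take_Suc_conv_app_nth)
  then show ?case using Suc by simp
qed

locale PF =
  fixes th :: morph
  assumes pf: "paperfolding th" and sy: "symmetric_morph th" and perf: "perfect th"
begin

lemma th_rot: "th (rot x) = map rot (th x)" using sy by (simp add: symmetric_morph_def)

lemma th_pal: "rev (th x) = th x"
proof -
  have "map rot (rev (th x)) = map rot (th x)"
    using pf th_rot[of x] by (simp add: paperfolding_def)
  then show ?thesis using inj_rot by (simp add: inj_map_eq_map)
qed

lemma th_rotpow: "th ((rot ^^ k) x) = map (rot ^^ k) (th x)"
  by (induction k) (auto simp: th_rot)

definition L where "L = length (th A)"

lemma len_th: "length (th x) = L"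
proof -
  obtain k where "x = (rot ^^ k) A" using letter_rot by blast
  then show ?thesis by (simp add: th_rotpow L_def)
qed

lemma L_ge2: "L \<ge> 2" using perf by (simp add: perfect_def L_def)
lemma hd_thA: "hd (th A) = A" using perf by (simp add: perfect_def)

lemma len_ext: "length (ext th w) = L * length w"
  by (induction w) (auto simp: len_th)

definition P where "P n = (ext th ^^ n) [A]"

lemma len_P: "length (P n) = L ^ n"
  by (induction n) (auto simp: P_def len_ext)

lemma ext_map_rotpow: "ext th (map (rot ^^ k) w) = map (rot ^^ k) (ext th w)"
  by (induction w) (auto simp: th_rotpow)

lemma extpow_map_rotpow: "(ext th ^^ n) (map (rot ^^ k) w) = map (rot ^^ k) ((ext th ^^ n) w)"
  by (induction n) (auto simp: ext_map_rotpow)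

lemma ext_rev: "ext th (rev w) = rev (ext th w)"
  by (induction w) (auto simp: th_pal)

lemma P_pal: "rev (P n) = P n"
proof (induction n)
  case 0 then show ?case by (simp add: P_def)
next
  case (Suc n)
  have "P (Suc n) = ext th (P n)" by (simp add: P_def)
  then show ?case using Suc by (metis ext_rev)
qed

lemma P_Suc: "P (Suc n) = (ext th ^^ n) (th A)"
  by (simp add: P_def funpow_Suc_right del: funpow.simps)

definition x1 where "x1 = th A ! 1"

lemma thA_split: "th A = A # x1 # drop 2 (th A)"
proof -
  have l: "length (th A) \<ge> 2" using L_ge2 L_def by simp
  then obtain y ys where e: "th A = y # ys" by (cases "th A") auto
  with hd_thA have "y = A" by simp
  moreover from l e obtain z zs where "ys = z # zs" by (cases ys) auto
  ultimately show ?thesis using e by (simp add: x1_def)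
qed

lemma x1_rot: "\<exists>k. (k = 1 \<or> k = 3) \<and> x1 = (rot ^^ k) A"
proof -
  have l: "Suc 0 < length (th A)" using L_ge2 L_def by simp
  have "in_ac (th A ! 0) \<noteq> in_ac (th A ! Suc 0)" using pf l by (simp add: paperfolding_def)
  moreover have "th A ! 0 = A" using thA_split by (metis nth_Cons_0)
  ultimately have "\<not> in_ac x1" by (simp add: in_ac_def x1_def)
  then have "x1 = B \<or> x1 = D" by (cases x1) (auto simp: in_ac_def)
  then show ?thesis
    by (elim disjE; (intro exI[of _ 1]; simp; fail)?; intro exI[of _ 3]) (auto simp: numeral_3_eq_3)
qed

end



lemma Ssum_rev[simp]: "Ssum (rev w) = Ssum w"
  by (simp add: Ssum_def rev_map[symmetric] sum_list_rev)

context PF begin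

lemma P_Suc_split: "x1 = (rot ^^ k) A \<Longrightarrow>
   P (Suc n) = P n @ map (rot ^^ k) (P n) @ (ext th ^^ n) (drop 2 (th A))"
proof -
  assume k: "x1 = (rot ^^ k) A"
  have "P (Suc n) = (ext th ^^ n) ([A] @ [x1] @ drop 2 (th A))"
    using P_Suc thA_split by (metis append_Cons append_Nil)
  also have "\<dots> = P n @ (ext th ^^ n) [x1] @ (ext th ^^ n) (drop 2 (th A))"
    by (simp only: extpow_append P_def)
  also have "(ext th ^^ n) [x1] = map (rot ^^ k) (P n)"
    using extpow_map_rotpow[of n k "[A]"] k by (simp add: P_def)
  finally show ?thesis .
qed

lemma P_prefix: "\<exists>r. P (n + d) = P n @ r"
proof (induction d)
  case 0 then show ?case by simp
next
  case (Suc d)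
  obtain k where "x1 = (rot ^^ k) A" using x1_rot by blast
  then obtain s where "P (Suc (n + d)) = P (n + d) @ s" using P_Suc_split by blast
  with Suc obtain r where "P (Suc (n + d)) = P n @ r @ s" by auto
  then show ?case by auto
qed

lemma P_nth_mono: "i < L ^ n \<Longrightarrow> n \<le> m \<Longrightarrow> P m ! i = P n ! i"
proof -
  assume i: "i < L ^ n" and nm: "n \<le> m"
  obtain r where "P (n + (m - n)) = P n @ r" using P_prefix by blast
  with nm have "P m = P n @ r" by simp
  then show ?thesis using i len_P by (simp add: nth_append)
qed

lemma lt_Lpow: "i < L ^ i"
proof -
  have "i < 2 ^ i" by (rule less_exp)
  also have "(2::nat) ^ i \<le> L ^ i" using L_ge2 by (simp add: power_mono)
  finally show ?thesis .
qed

definition X where "X = fixpt th"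
definition W where "W n = walk X n"

lemma X_P: "i < L ^ N \<Longrightarrow> X i = P N ! i"
proof -
  assume i: "i < L ^ N"
  have i2: "i < L ^ Suc i" using lt_Lpow[of "Suc i"] by simp
  have "X i = P (Suc i) ! i" by (simp add: X_def fixpt_def P_def)
  also have "\<dots> = P (max N (Suc i)) ! i" using P_nth_mono[OF i2, of "max N (Suc i)"] by simp
  also have "\<dots> = P N ! i" using P_nth_mono[OF i, of "max N (Suc i)"] by simp
  finally show ?thesis .
qed

lemma W_P: "n \<le> L ^ N \<Longrightarrow> W n = Ssum (take n (P N))"
proof -
  assume n: "n \<le> L ^ N"
  have "Ssum (take n (P N)) = (\<Sum>i<n. Sv (P N ! i))" using n len_P by (simp add: Ssum_take_sum)
  also have "\<dots> = (\<Sum>i<n. Sv (X i))" using n X_P[of _ N] by (intro sum.cong) (auto simp del: X_def)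
  finally show ?thesis by (simp add: W_def walk_def)
qed

lemma W_0[simp]: "W 0 = 0" by (simp add: W_def walk_def)
lemma X_0: "X 0 = A"
proof -
  have "X 0 = P 1 ! 0" using X_P[of 0 1] L_ge2 by simp
  also have "P 1 = th A" by (simp add: P_def)
  finally show ?thesis using thA_split by (metis nth_Cons_0)
qed
lemma W_1: "W 1 = (1, 0)" by (simp add: W_def walk_def X_0)

lemma W_Suc: "W (Suc l) = W l + Sv (X l)" by (simp add: W_def walk_def)

lemma walk_rot: "walk ((rot ^^ j) \<circ> X) n = (rotv ^^ j) (W n)"
  by (simp add: walk_def W_def Sv_rotpow rotvpow_sum)

definition v where "v j = Ssum (P j)"

lemma W_left: "r \<le> L ^ j \<Longrightarrow> W (L ^ j - r) = v j - W r"
proof -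
  assume r: "r \<le> L ^ j"
  have "P j = take (L ^ j - r) (P j) @ drop (L ^ j - r) (P j)" by simp
  then have "v j = Ssum (take (L ^ j - r) (P j)) + Ssum (drop (L ^ j - r) (P j))"
    by (metis Ssum_append v_def)
  moreover have "drop (L ^ j - r) (P j) = rev (take r (P j))"
  proof -
    have "take r (rev (P j)) = rev (drop (L ^ j - r) (P j))" by (simp add: take_rev len_P)
    then show ?thesis using P_pal by (metis rev_rev_ident)
  qed
  ultimately have "v j = W (L ^ j - r) + W r" using W_P[of "L ^ j - r" j] W_P[OF r] by simp
  then show ?thesis by (simp add: algebra_simps)
qed

lemma W_right: "x1 = (rot ^^ k) A \<Longrightarrow> r \<le> L ^ j \<Longrightarrow> W (L ^ j + r) = v j + (rotv ^^ k) (W r)"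
proof -
  assume k: "x1 = (rot ^^ k) A" and r: "r \<le> L ^ j"
  have le: "L ^ j + r \<le> L ^ Suc j"
  proof -
    have "L ^ j + r \<le> 2 * L ^ j" using r by simp
    also have "\<dots> \<le> L * L ^ j" using L_ge2 by (intro mult_right_mono) auto
    finally show ?thesis by simp
  qed
  have "take (L ^ j + r) (P (Suc j)) = P j @ take r (map (rot ^^ k) (P j))"
    using P_Suc_split[OF k, of j] r len_P by simp
  then have "W (L ^ j + r) = v j + Ssum (map (rot ^^ k) (take r (P j)))"
    using W_P[OF le] by (simp add: v_def take_map)
  then show ?thesis using W_P[OF r] by (simp add: Ssum_map_rotpow)
qed

end



lemma rotv1: "(rotv ^^ 1) p = (- snd p, fst p)" by (simp add: rotv_def)
lemma rotv2: "(rotv ^^ 2) p = (- fst p, - snd p)" by (simp add: rotv_def numeral_2_eq_2)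
lemma rotv3: "(rotv ^^ 3) p = (snd p, - fst p)" by (simp add: rotv_def numeral_3_eq_3)

context PF begin

lemma collision:
  assumes e: "W n' = (rotv ^^ s) (W n)" and s: "s = 1 \<or> s = 3" and n: "1 \<le> n"
  shows "\<exists>a b. a < b \<and> W a = W b"
proof -
  obtain k where k: "k = 1 \<or> k = 3" and kx: "x1 = (rot ^^ k) A" using x1_rot by blast
  define j where "j = n + n'"
  have nj: "n \<le> L ^ j" and nj': "n' \<le> L ^ j" using lt_Lpow[of j] unfolding j_def by auto
  obtain a b where wn: "W n = (a, b)" by (cases "W n")
  show ?thesis
  proof (cases "s = k")
    case True
    have "W (L ^ j + n') = v j + (rotv ^^ k) (W n')" by (rule W_right[OF kx nj'])
    also have "\<dots> = v j - W n" using e True k s wn by (auto simp: rotv1 rotv3 rotv_def)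
    also have "\<dots> = W (L ^ j - n)" using W_left[OF nj] by simp
    finally show ?thesis using n nj by (intro exI[of _ "L ^ j - n"] exI[of _ "L ^ j + n'"]) auto
  next
    case False
    have "W (L ^ j + n) = v j + (rotv ^^ k) (W n)" by (rule W_right[OF kx nj])
    also have "\<dots> = v j - W n'" using e False k s wn by (auto simp: rotv1 rotv3 rotv_def)
    also have "\<dots> = W (L ^ j - n')" using W_left[OF nj'] by simp
    finally show ?thesis using n nj' by (intro exI[of _ "L ^ j - n'"] exI[of _ "L ^ j + n"]) auto
  qed
qed

lemma zero_in:
  assumes ab: "a < b" and e: "W a = W b"
  shows "(0, 0) \<in> Ssum ` language th"
proof -
  have b: "b \<le> L ^ b" using lt_Lpow[of b] by simp
  define w where "w = drop a (take b (P b))"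
  have "length w = b - a" using b len_P by (simp add: w_def)
  then have ne: "w \<noteq> []" using ab by auto
  have tt: "take a (take b (P b)) = take a (P b)" using ab by simp
  have "take a (P b) @ w @ drop b (P b) = (take a (take b (P b)) @ drop a (take b (P b))) @ drop b (P b)"
    using tt by (simp add: w_def)
  also have "\<dots> = P b" by (simp only: append_take_drop_id)
  finally have "take a (P b) @ w @ drop b (P b) = P b" .
  then have lang: "w \<in> language th" using ne unfolding language_def P_def by blast
  have "W b = Ssum (take a (take b (P b))) + Ssum w"
    using W_P[OF b] Ssum_append[of "take a (take b (P b))" w, symmetric] by (simp only: w_def append_take_drop_id)
  also note tt
  also have "Ssum (take a (P b)) = W a" using W_P[of a b] ab b by simp
  finally have "Ssum w = 0" using e by simp
  then show ?thesis using lang by (metis image_eqI zero_prod_def)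
qed

lemma nonzero_in:
  assumes e: "walk ((rot ^^ j) \<circ> fixpt th) n = p" and p: "p \<noteq> 0"
  shows "p \<in> Ssum ` language th"
proof -
  have wp: "(rotv ^^ j) (W n) = p" using e walk_rot by (simp add: X_def)
  have n0: "n \<noteq> 0"
  proof
    assume "n = 0" then show False using wp p by simp
  qed
  have nL: "n \<le> L ^ n" using lt_Lpow[of n] by simp
  define w where "w = map (rot ^^ j) (take n (P n))"
  have "length (take n (P n)) = n" using nL len_P by simp
  then have ne: "w \<noteq> []" using n0 by (auto simp: w_def)
  have "(ext th ^^ n) [(rot ^^ j) A] = map (rot ^^ j) (P n)"
    using extpow_map_rotpow[of n j "[A]"] by (simp add: P_def)
  then have "[] @ w @ map (rot ^^ j) (drop n (P n)) = (ext th ^^ n) [(rot ^^ j) A]"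
    by (simp add: w_def map_append[symmetric] del: map_append)
  then have lang: "w \<in> language th" using ne unfolding language_def by blast
  have "Ssum w = p" using wp W_P[OF nL] by (simp add: w_def Ssum_map_rotpow)
  then show ?thesis using lang by blast
qed

definition Sp where "Sp p = {(j, n). j < (4::nat) \<and> walk ((rot ^^ j) \<circ> fixpt th) n = p}"

lemma Sp_card: "card (Sp p) = (if p = (0, 0) then 4 else 2)"
  using perf unfolding perfect_def Sp_def by blast

lemma Sp_finite: "finite (Sp p)"
proof (rule ccontr)
  assume "infinite (Sp p)" then have "card (Sp p) = 0" by simp
  then show False using Sp_card[of p] by (simp split: if_splits)
qed

lemma Sp_mem: "(j, n) \<in> Sp p \<longleftrightarrow> j < 4 \<and> (rotv ^^ j) (W n) = p"
  by (simp add: Sp_def walk_rot[unfolded X_def])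

lemma rotvpow_zero': "(rotv ^^ j) (0, 0) = (0, 0)" using rotvpow_zero[of j] by (simp add: zero_prod_def)

lemma W_nz: assumes "1 \<le> k" shows "W k \<noteq> 0"
proof
  assume wk: "W k = 0"
  let ?T = "(\<lambda>j. (j, 0::nat)) ` {..<4::nat}"
  have cT: "card ?T = 4" by (subst card_image) (auto simp: inj_on_def)
  have sub: "insert (0, k) ?T \<subseteq> Sp (0, 0)"
    using wk by (auto simp: Sp_mem zero_prod_def rotvpow_zero')
  have "card (insert (0, k) ?T) = 5" using cT assms by (subst card_insert_disjoint) auto
  moreover have "card (insert (0, k) ?T) \<le> card (Sp (0,0))" by (rule card_mono[OF Sp_finite sub])
  ultimately show False using Sp_card[of "(0,0)"] by simp
qed

lemma W_unbounded: "\<exists>T. K < \<bar>fst (W T)\<bar> \<or> K < \<bar>snd (W T)\<bar>"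
proof (rule ccontr)
  assume "\<not> ?thesis"
  then have a: "\<forall>T. \<not> (K < \<bar>fst (W T)\<bar> \<or> K < \<bar>snd (W T)\<bar>)" by blast
  have "\<forall>T. W T \<in> {-K..K} \<times> {-K..K}"
  proof
    fix T
    obtain x y where "W T = (x, y)" by (cases "W T")
    then show "W T \<in> {-K..K} \<times> {-K..K}" using a[rule_format, of T] by auto
  qed
  then have "range W \<subseteq> {-K..K} \<times> {-K..K}" by blast
  then have fin: "finite (W ` UNIV)" by (rule finite_subset) auto
  obtain a0 where inf: "infinite {a. W a = W a0}"
    using pigeonhole_infinite[OF infinite_UNIV_nat fin] by auto
  have "(\<lambda>a. (0::nat, a)) ` {a. W a = W a0} \<subseteq> Sp (W a0)" by (auto simp: Sp_mem)
  moreover have "infinite ((\<lambda>a. (0::nat, a)) ` {a. W a = W a0})"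
    using inf by (subst finite_image_iff) (auto simp: inj_on_def)
  ultimately show False using Sp_finite infinite_super by blast
qed

lemma second_visit: "\<exists>m n0. m < 4 \<and> (m, n0) \<noteq> (0, 1) \<and> (rotv ^^ m) (W n0) = (1, 0)"
proof (rule ccontr)
  assume "\<not> ?thesis"
  note nt = this
  have "Sp (1, 0) \<subseteq> {(0, 1)}"
  proof
    fix x assume x: "x \<in> Sp (1, 0)"
    obtain m n0 where xe: "x = (m, n0)" by (cases x)
    show "x \<in> {(0, 1)}" using x nt unfolding xe Sp_mem by auto
  qed
  then have "card (Sp (1,0)) \<le> card {(0::nat, 1::nat)}" by (intro card_mono) auto
  then show False using Sp_card[of "(1,0)"] by simp
qed

end



definition hcol :: "int \<times> int \<Rightarrow> int \<times> int \<Rightarrow> int \<times> int \<Rightarrow> bool" where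
  "hcol q p p' \<longleftrightarrow> snd p = snd p' \<and> snd q < snd p \<and>
     ((fst p = fst q \<and> fst p' = fst q + 1) \<or> (fst p' = fst q \<and> fst p = fst q + 1))"

definition hcolb :: "int \<times> int \<Rightarrow> int \<times> int \<Rightarrow> int \<times> int \<Rightarrow> bool" where
  "hcolb q p p' \<longleftrightarrow> snd p = snd p' \<and> snd p < snd q \<and>
     ((fst p = fst q \<and> fst p' = fst q + 1) \<or> (fst p' = fst q \<and> fst p = fst q + 1))"

definition unitstep :: "int \<times> int \<Rightarrow> int \<times> int \<Rightarrow> bool" where
  "unitstep p p' \<longleftrightarrow> (fst p' = fst p + 1 \<and> snd p' = snd p) \<or> (fst p' = fst p - 1 \<and> snd p' = snd p)
     \<or> (fst p' = fst p \<and> snd p' = snd p + 1) \<or> (fst p' = fst p \<and> snd p' = snd p - 1)"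

definition cnt :: "(nat \<Rightarrow> int \<times> int) \<Rightarrow> nat \<Rightarrow> (int \<times> int \<Rightarrow> int \<times> int \<Rightarrow> bool) \<Rightarrow> nat" where
  "cnt w n R = card {l \<in> {1..<n}. R (w l) (w (Suc l))}"

lemma chg_parity:
  fixes f :: "nat \<Rightarrow> bool"
  assumes "1 \<le> n"
  shows "even (card {l \<in> {1..<n}. f l \<noteq> f (Suc l)}) \<longleftrightarrow> (f 1 = f n)"
  using assms
proof (induction n rule: nat_induct_at_least)
  case base then show ?case by simp
next
  case (Suc n)
  have fin: "finite {l \<in> {1..<n}. f l \<noteq> f (Suc l)}" by simp
  show ?case
  proof (cases "f n \<noteq> f (Suc n)")
    case True
    then have "{l \<in> {1..<Suc n}. f l \<noteq> f (Suc l)} = insert n {l \<in> {1..<n}. f l \<noteq> f (Suc l)}"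
      using Suc.hyps by auto
    then have "card {l \<in> {1..<Suc n}. f l \<noteq> f (Suc l)} = Suc (card {l \<in> {1..<n}. f l \<noteq> f (Suc l)})"
      using fin by simp
    then show ?thesis using Suc.IH True by auto
  next
    case False
    then have "{l \<in> {1..<Suc n}. f l \<noteq> f (Suc l)} = {l \<in> {1..<n}. f l \<noteq> f (Suc l)}"
      using Suc.hyps by (auto simp: less_Suc_eq)
    then show ?thesis using Suc.IH False by auto
  qed
qed

lemma card_split:
  assumes "finite I" and "\<forall>l\<in>I. (P l \<longleftrightarrow> Q l \<or> R l) \<and> \<not> (Q l \<and> R l)"
  shows "card {l \<in> I. P l} = card {l \<in> I. Q l} + card {l \<in> I. R l}"
proof -
  have "{l \<in> I. P l} = {l \<in> I. Q l} \<union> {l \<in> I. R l}" using assms(2) by auto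
  moreover have "{l \<in> I. Q l} \<inter> {l \<in> I. R l} = {}" using assms(2) by auto
  ultimately show ?thesis using assms(1) by (simp add: card_Un_disjoint)
qed

lemma ptA:
  assumes "unitstep p p'" "p \<noteq> (fst q + 1, snd q)" "p' \<noteq> (fst q + 1, snd q)"
  shows "((fst p = fst q + 1 \<and> snd q < snd p) \<noteq> (fst p' = fst q + 1 \<and> snd q < snd p'))
           \<longleftrightarrow> hcol q p p' \<or> hcol (fst q + 1, snd q) p p'"
    and "\<not> (hcol q p p' \<and> hcol (fst q + 1, snd q) p p')"
  using assms by (cases p; cases p'; cases q; auto simp: unitstep_def hcol_def)+

lemma ptB:
  assumes "unitstep p p'" "p \<noteq> (fst q, snd q + 1)" "p' \<noteq> (fst q, snd q + 1)"
  shows "hcol q p p' \<longleftrightarrow> hcol (fst q, snd q + 1) p p'"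
  using assms by (cases p; cases p'; cases q; auto simp: unitstep_def hcol_def)

lemma ptC:
  assumes "unitstep p p'" "p \<noteq> 0" "p' \<noteq> 0"
  shows "((1 \<le> fst p) \<noteq> (1 \<le> fst p')) \<longleftrightarrow> hcol 0 p p' \<or> hcolb 0 p p'"
    and "\<not> (hcol 0 p p' \<and> hcolb 0 p p')"
  using assms by (cases p; cases p'; auto simp: unitstep_def hcol_def hcolb_def zero_prod_def)+

lemma ptD:
  assumes "unitstep p p'" "p \<noteq> 0" "p' \<noteq> 0"
  shows "((fst p = 0 \<and> snd p < 0) \<noteq> (fst p' = 0 \<and> snd p' < 0)) \<longleftrightarrow> hcolb 0 p p' \<or> hcolb (-1, 0) p p'"
    and "\<not> (hcolb 0 p p' \<and> hcolb (-1, 0) p p')"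
  using assms by (cases p; cases p'; auto simp: unitstep_def hcol_def hcolb_def zero_prod_def)+

lemma ptE: "hcol 0 (- p) (- p') \<longleftrightarrow> hcolb (-1, 0) p p'"
  by (cases p; cases p'; auto simp: hcol_def hcolb_def zero_prod_def)

lemma unitstep_neg: "unitstep p p' \<Longrightarrow> unitstep (- p) (- p')"
  by (cases p; cases p'; auto simp: unitstep_def)

lemma unitstep_rotv: "unitstep p p' \<Longrightarrow> unitstep (rotv p) (rotv p')"
  by (cases p; cases p'; auto simp: unitstep_def rotv_def)




lemma hard:
  fixes W :: "nat \<Rightarrow> int \<times> int" and n0 :: nat
  assumes st: "\<And>l. unitstep (W l) (W (Suc l))"
    and W0: "W 0 = 0" and W1: "W 1 = (1, 0)" and Wn0: "W n0 = (-1, 0)" and n0: "1 \<le> n0"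
    and nz: "\<And>k. 1 \<le> k \<Longrightarrow> W k \<noteq> 0"
    and unb: "\<And>K. \<exists>T. K < \<bar>fst (W T)\<bar> \<or> K < \<bar>snd (W T)\<bar>"
  shows "\<exists>t k. 1 \<le> k \<and> (W t = (rotv ^^ 1) (W k) \<or> W t = (rotv ^^ 3) (W k))"
proof -
  define Lam where "Lam q \<longleftrightarrow> (\<exists>k\<in>{1..n0}. q = W k \<or> q = - W k)" for q
  define Wn where "Wn l = - W l" for l
  define par where "par q = cnt W n0 (hcol q) + cnt Wn n0 (hcol q)" for q
  have stn: "unitstep (Wn l) (Wn (Suc l))" for l using st unitstep_neg by (simp add: Wn_def)
  have onp: "Lam (W l) \<and> Lam (W (Suc l)) \<and> Lam (Wn l) \<and> Lam (Wn (Suc l))" if "l \<in> {1..<n0}" for l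
  proof -
    have "l \<in> {1..n0}" "Suc l \<in> {1..n0}" using that by auto
    then show ?thesis unfolding Lam_def Wn_def by blast
  qed
  have Wn1: "Wn 1 = W n0" and Wnn0: "Wn n0 = W 1" using W1 Wn0 by (auto simp: Wn_def)

  have inv_h: "even (par q) = even (par q')"
    if nq: "\<not> Lam q" and nq': "\<not> Lam q'" and q': "q' = (fst q + 1, snd q)" for q q'
  proof -
    define rho where "rho p \<longleftrightarrow> fst p = fst q + 1 \<and> snd q < snd p" for p
    have c1: "card {l \<in> {1..<n0}. rho (W l) \<noteq> rho (W (Suc l))} = cnt W n0 (hcol q) + cnt W n0 (hcol q')"
      unfolding cnt_def
    proof (rule card_split)
      show "\<forall>l\<in>{1..<n0}. (rho (W l) \<noteq> rho (W (Suc l)) \<longleftrightarrow> hcol q (W l) (W (Suc l)) \<or> hcol q' (W l) (W (Suc l)))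
          \<and> \<not> (hcol q (W l) (W (Suc l)) \<and> hcol q' (W l) (W (Suc l)))"
      proof
        fix l assume l: "l \<in> {1..<n0}"
        have "W l \<noteq> q'" "W (Suc l) \<noteq> q'" using onp[OF l] nq' by auto
        then show "(rho (W l) \<noteq> rho (W (Suc l)) \<longleftrightarrow> hcol q (W l) (W (Suc l)) \<or> hcol q' (W l) (W (Suc l)))
          \<and> \<not> (hcol q (W l) (W (Suc l)) \<and> hcol q' (W l) (W (Suc l)))"
          using ptA[OF st[of l]] q' unfolding rho_def by auto
      qed
    qed simp
    have c2: "card {l \<in> {1..<n0}. rho (Wn l) \<noteq> rho (Wn (Suc l))} = cnt Wn n0 (hcol q) + cnt Wn n0 (hcol q')"
      unfolding cnt_def
    proof (rule card_split)
      show "\<forall>l\<in>{1..<n0}. (rho (Wn l) \<noteq> rho (Wn (Suc l)) \<longleftrightarrow> hcol q (Wn l) (Wn (Suc l)) \<or> hcol q' (Wn l) (Wn (Suc l)))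
          \<and> \<not> (hcol q (Wn l) (Wn (Suc l)) \<and> hcol q' (Wn l) (Wn (Suc l)))"
      proof
        fix l assume l: "l \<in> {1..<n0}"
        have "Wn l \<noteq> q'" "Wn (Suc l) \<noteq> q'" using onp[OF l] nq' by auto
        then show "(rho (Wn l) \<noteq> rho (Wn (Suc l)) \<longleftrightarrow> hcol q (Wn l) (Wn (Suc l)) \<or> hcol q' (Wn l) (Wn (Suc l)))
          \<and> \<not> (hcol q (Wn l) (Wn (Suc l)) \<and> hcol q' (Wn l) (Wn (Suc l)))"
          using ptA[OF stn[of l]] q' unfolding rho_def by auto
      qed
    qed simp
    have e1: "even (card {l \<in> {1..<n0}. rho (W l) \<noteq> rho (W (Suc l))}) \<longleftrightarrow> rho (W 1) = rho (W n0)"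
      using chg_parity[OF n0, of "\<lambda>l. rho (W l)"] by simp
    have e2: "even (card {l \<in> {1..<n0}. rho (Wn l) \<noteq> rho (Wn (Suc l))}) \<longleftrightarrow> rho (W 1) = rho (W n0)"
      using chg_parity[OF n0, of "\<lambda>l. rho (Wn l)"] Wn1 Wnn0 by auto
    have "even (par q + par q')" using c1 c2 e1 e2 unfolding par_def by auto
    then show ?thesis by auto
  qed

  have inv_v: "par q = par q'"
    if nq': "\<not> Lam q'" and q': "q' = (fst q, snd q + 1)" for q q'
  proof -
    have a: "cnt W n0 (hcol q) = cnt W n0 (hcol q')" unfolding cnt_def
    proof (intro arg_cong[where f=card] Collect_cong conj_cong refl)
      fix l assume l: "l \<in> {1..<n0}"
      have "W l \<noteq> q'" "W (Suc l) \<noteq> q'" using onp[OF l] nq' by auto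
      then show "hcol q (W l) (W (Suc l)) = hcol q' (W l) (W (Suc l))" using ptB[OF st[of l]] q' by auto
    qed
    have b: "cnt Wn n0 (hcol q) = cnt Wn n0 (hcol q')" unfolding cnt_def
    proof (intro arg_cong[where f=card] Collect_cong conj_cong refl)
      fix l assume l: "l \<in> {1..<n0}"
      have "Wn l \<noteq> q'" "Wn (Suc l) \<noteq> q'" using onp[OF l] nq' by auto
      then show "hcol q (Wn l) (Wn (Suc l)) = hcol q' (Wn l) (Wn (Suc l))" using ptB[OF stn[of l]] q' by auto
    qed
    show ?thesis using a b by (simp add: par_def)
  qed

  have inv: "even (par q) = even (par q')" if "\<not> Lam q" "\<not> Lam q'" "unitstep q q'" for q q'
  proof -
    obtain a b where q: "q = (a, b)" by (cases q)
    from that(3) have "q' = (a + 1, b) \<or> q' = (a - 1, b) \<or> q' = (a, b + 1) \<or> q' = (a, b - 1)"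
      unfolding unitstep_def q by (cases q') auto
    then show ?thesis
    proof (elim disjE)
      assume "q' = (a + 1, b)" then show ?thesis using inv_h[OF that(1,2)] q by simp
    next
      assume "q' = (a - 1, b)" then show ?thesis using inv_h[OF that(2,1)] q by simp
    next
      assume "q' = (a, b + 1)" then show ?thesis using inv_v[OF that(2)] q by simp
    next
      assume "q' = (a, b - 1)" then show ?thesis using inv_v[OF that(1), of q'] q by simp
    qed
  qed

  have par0: "odd (par 0)"
  proof -
    have nzp: "W l \<noteq> 0 \<and> W (Suc l) \<noteq> 0" if "l \<in> {1..<n0}" for l using nz that by auto
    have cA: "card {l \<in> {1..<n0}. (1 \<le> fst (W l)) \<noteq> (1 \<le> fst (W (Suc l)))} = cnt W n0 (hcol 0) + cnt W n0 (hcolb 0)"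
      unfolding cnt_def by (rule card_split) (use ptC[OF st] nzp in auto)
    have cB: "card {l \<in> {1..<n0}. (fst (W l) = 0 \<and> snd (W l) < 0) \<noteq> (fst (W (Suc l)) = 0 \<and> snd (W (Suc l)) < 0)}
        = cnt W n0 (hcolb 0) + cnt W n0 (hcolb (-1, 0))"
      unfolding cnt_def by (rule card_split) (use ptD[OF st] nzp in auto)
    have cE: "cnt Wn n0 (hcol 0) = cnt W n0 (hcolb (-1, 0))"
      unfolding cnt_def Wn_def by (simp add: ptE)
    have oA: "odd (card {l \<in> {1..<n0}. (1 \<le> fst (W l)) \<noteq> (1 \<le> fst (W (Suc l)))})"
      using chg_parity[OF n0, of "\<lambda>l. 1 \<le> fst (W l)"] W1 Wn0 by simp
    have eB: "even (card {l \<in> {1..<n0}. (fst (W l) = 0 \<and> snd (W l) < 0) \<noteq> (fst (W (Suc l)) = 0 \<and> snd (W (Suc l)) < 0)})"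
      using chg_parity[OF n0, of "\<lambda>l. fst (W l) = 0 \<and> snd (W l) < 0"] W1 Wn0 by simp
    show ?thesis using cA cB cE oA eB unfolding par_def by auto
  qed

  define K where "K = (\<Sum>k\<in>{1..n0}. \<bar>fst (W k)\<bar> + \<bar>snd (W k)\<bar>)"
  have bnd: "\<bar>fst (W k)\<bar> \<le> K \<and> \<bar>snd (W k)\<bar> \<le> K" if "k \<in> {1..n0}" for k
  proof -
    have "\<bar>fst (W k)\<bar> + \<bar>snd (W k)\<bar> \<le> K" unfolding K_def
      by (rule member_le_sum[OF that]) auto
    then show ?thesis by auto
  qed
  have far: "par q = 0" if fq: "K < fst q \<or> fst q < - K - 1 \<or> K \<le> snd q" for q
  proof -
    have "{l \<in> {1..<n0}. hcol q (W l) (W (Suc l))} = {}"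
    proof -
      have "\<not> hcol q (W l) (W (Suc l))" if l: "l \<in> {1..<n0}" for l
        using bnd[of l] bnd[of "Suc l"] l fq unfolding hcol_def by auto
      then show ?thesis by auto
    qed
    moreover have "{l \<in> {1..<n0}. hcol q (Wn l) (Wn (Suc l))} = {}"
    proof -
      have "\<not> hcol q (Wn l) (Wn (Suc l))" if l: "l \<in> {1..<n0}" for l
        using bnd[of l] bnd[of "Suc l"] l fq unfolding hcol_def Wn_def by auto
      then show ?thesis by auto
    qed
    ultimately show ?thesis unfolding par_def cnt_def by simp
  qed

  have nL0: "\<not> Lam 0" unfolding Lam_def using nz by auto

  have path: "\<exists>t. Lam (V t)"
    if sv: "\<And>l. unitstep (V l) (V (Suc l))" and v0: "V 0 = 0" and ev: "even (par (V T))" for V T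
  proof (rule ccontr)
    assume "\<not> (\<exists>t. Lam (V t))"
    then have nl: "\<not> Lam (V t)" for t by blast
    have "odd (par (V t))" for t
    proof (induction t)
      case 0 then show ?case using par0 v0 by simp
    next
      case (Suc t) then show ?case using inv[OF nl nl sv] by simp
    qed
    then show False using ev by blast
  qed

  define V1 where "V1 l = rotv (W l)" for l
  define V3 where "V3 l = - rotv (W l)" for l
  have s1: "unitstep (V1 l) (V1 (Suc l))" for l using st unitstep_rotv by (simp add: V1_def)
  have s3: "unitstep (V3 l) (V3 (Suc l))" for l using st unitstep_rotv unitstep_neg by (simp add: V3_def)
  have z1: "V1 0 = 0" and z3: "V3 0 = 0" using W0 by (simp_all add: V1_def V3_def)
  obtain T where T: "K + 1 < \<bar>fst (W T)\<bar> \<or> K + 1 < \<bar>snd (W T)\<bar>" using unb by blast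
  have "\<exists>t. Lam (V1 t) \<or> Lam (V3 t)"
  proof -
    obtain a b where wt: "W T = (a, b)" by (cases "W T")
    have "K + 1 < a \<or> a < - K - 1 \<or> K + 1 < b \<or> b < - K - 1" using T wt by auto
    then show ?thesis
    proof (elim disjE)
      assume "K + 1 < a"
      then have "par (V1 T) = 0" using far by (simp add: V1_def wt rotv_def)
      then show ?thesis using path[OF s1 z1, of T] by auto
    next
      assume "a < - K - 1"
      then have "par (V3 T) = 0" using far by (simp add: V3_def wt rotv_def)
      then show ?thesis using path[OF s3 z3, of T] by auto
    next
      assume "K + 1 < b"
      then have "par (V1 T) = 0" using far by (simp add: V1_def wt rotv_def)
      then show ?thesis using path[OF s1 z1, of T] by auto
    next
      assume "b < - K - 1"
      then have "par (V1 T) = 0" using far by (simp add: V1_def wt rotv_def)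
      then show ?thesis using path[OF s1 z1, of T] by auto
    qed
  qed
  then obtain t k where k: "k \<in> {1..n0}" and
    "rotv (W t) = W k \<or> rotv (W t) = - W k \<or> - rotv (W t) = W k \<or> - rotv (W t) = - W k"
    unfolding Lam_def V1_def V3_def by blast
  then have "W t = (rotv ^^ 1) (W k) \<or> W t = (rotv ^^ 3) (W k)"
    by (cases "W t"; cases "W k") (auto simp: rotv_def numeral_3_eq_3)
  then show ?thesis using k by auto
qed




context PF begin

lemma W_step: "unitstep (W l) (W (Suc l))"
  by (cases "X l"; cases "W l") (auto simp: W_Suc unitstep_def)

lemma zero_main: "(0, 0) \<in> Ssum ` language th"
proof -
  obtain m n0 where m: "m < 4" and mn: "(m, n0) \<noteq> (0, 1)" and e: "(rotv ^^ m) (W n0) = (1, 0)"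
    using second_visit by blast
  have n0: "n0 \<noteq> 0"
  proof
    assume "n0 = 0"
    then have "(rotv ^^ m) (W n0) = 0" by simp
    then show False using e by (simp add: zero_prod_def)
  qed
  obtain a b where wn: "W n0 = (a, b)" by (cases "W n0")
  have "m = 0 \<or> m = 1 \<or> m = 2 \<or> m = 3" using m by auto
  then show ?thesis
  proof (elim disjE)
    assume m0: "m = 0"
    then have "W n0 = W 1" "n0 \<noteq> 1" using e mn W_1 by auto
    then show ?thesis using zero_in[of "min 1 n0" "max 1 n0"] n0
      by (cases "n0 < 1") (auto simp: min_def max_def)
  next
    assume "m = 1"
    then have "W n0 = (rotv ^^ 3) (W 1)" using e wn W_1 by (simp add: rotv_def rotv3)
    then show ?thesis using collision[of n0 3 1] zero_in by auto
  next
    assume "m = 3"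
    then have "W n0 = (rotv ^^ 1) (W 1)" using e wn W_1 by (simp add: rotv_def rotv3)
    then show ?thesis using collision[of n0 1 1] zero_in by auto
  next
    assume "m = 2"
    then have wn0: "W n0 = (-1, 0)" using e wn by (simp add: rotv2)
    obtain t k where k: "1 \<le> k" and "W t = (rotv ^^ 1) (W k) \<or> W t = (rotv ^^ 3) (W k)"
      using hard[of W n0, OF W_step W_0 W_1 wn0 _ W_nz W_unbounded] n0 by auto
    then show ?thesis using collision[of t 1 k] collision[of t 3 k] zero_in by blast
  qed
qed

lemma main: "Ssum ` language th = UNIV"
proof (rule set_eqI, rule iffI)
  fix p :: "int \<times> int"
  show "p \<in> Ssum ` language th"
  proof (cases "p = (0, 0)")
    case True then show ?thesis using zero_main by simp
  next
    case False
    then have "card (Sp p) = 2" using Sp_card by simp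
    then have "Sp p \<noteq> {}" by auto
    then obtain j n where "(j, n) \<in> Sp p" by auto
    then have "walk ((rot ^^ j) \<circ> fixpt th) n = p" by (simp add: Sp_def)
    moreover have "p \<noteq> 0" using False by (simp add: zero_prod_def)
    ultimately show ?thesis by (rule nonzero_in)
  qed
qed simp

end

theorem proposition11:
  fixes \<theta> :: morph
  assumes "paperfolding \<theta>" and "symmetric_morph \<theta>" and "perfect \<theta>"
  shows "Ssum ` language \<theta> = UNIV"
proof -
  interpret PF \<theta> using assms by unfold_locales
  show ?thesis by (rule main)
qed


end
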